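(* Let $G$ be a graph, $\varphi$ a $4$-colouring of $G$, and $v$ a vertex of $G$ of degree $3$ that is $\varphi$-frozen. Then every neighbour of $v$ is $\varphi$-frozen.
   Context: Colourings are proper $4$-colourings (colours $\{1,2,3,4\}$); a recolouring sequence is a sequence of proper $4$-colourings in which consecutive ones differ on exactly one vertex. A vertex $v$ is $\varphi$-frozen if $\gamma(v)=\varphi(v)$ for every $4$-colouring $\gamma$ obtainable from $\varphi$ by a recolouring sequence. *)

theory Defs
  imports Main
begin

definition graph :: "'a set \<Rightarrow> ('a \<Rightarrow> 'a \<Rightarrow> bool) \<Rightarrow> bool" where
  "graph V E \<longleftrightarrow> finite V \<and> (\<forall>x y. E x y \<longrightarrow> x \<in> V \<and> y \<in> V)
     \<and> (\<forall>x y. E x y \<longrightarrow> E y x) \<and> (\<forall>x. \<not> E x x)"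

definition neighbours :: "'a set \<Rightarrow> ('a \<Rightarrow> 'a \<Rightarrow> bool) \<Rightarrow> 'a \<Rightarrow> 'a set" where
  "neighbours V E v = {u \<in> V. E v u}"

definition degree :: "'a set \<Rightarrow> ('a \<Rightarrow> 'a \<Rightarrow> bool) \<Rightarrow> 'a \<Rightarrow> nat" where
  "degree V E v = card (neighbours V E v)"

definition colouring4 :: "'a set \<Rightarrow> ('a \<Rightarrow> 'a \<Rightarrow> bool) \<Rightarrow> ('a \<Rightarrow> nat) \<Rightarrow> bool" where
  "colouring4 V E c \<longleftrightarrow> (\<forall>x\<in>V. c x \<in> {1,2,3,4}) \<and> (\<forall>x y. E x y \<longrightarrow> c x \<noteq> c y)"

definition recolour_step :: "'a set \<Rightarrow> ('a \<Rightarrow> 'a \<Rightarrow> bool) \<Rightarrow> ('a \<Rightarrow> nat) \<Rightarrow> ('a \<Rightarrow> nat) \<Rightarrow> bool" where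
  "recolour_step V E c d \<longleftrightarrow> colouring4 V E c \<and> colouring4 V E d
     \<and> card {x \<in> V. c x \<noteq> d x} = 1"

(* d is obtainable from c by a recolouring sequence (possibly of length zero);
   colourings are compared on V only *)
definition reachable :: "'a set \<Rightarrow> ('a \<Rightarrow> 'a \<Rightarrow> bool) \<Rightarrow> ('a \<Rightarrow> nat) \<Rightarrow> ('a \<Rightarrow> nat) \<Rightarrow> bool" where
  "reachable V E c d \<longleftrightarrow> (recolour_step V E)\<^sup>*\<^sup>* c d"

definition frozen :: "'a set \<Rightarrow> ('a \<Rightarrow> 'a \<Rightarrow> bool) \<Rightarrow> ('a \<Rightarrow> nat) \<Rightarrow> 'a \<Rightarrow> bool" where
  "frozen V E c v \<longleftrightarrow> (\<forall>d. reachable V E c d \<longrightarrow> d v = c v)"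

end

theory Submission
  imports Defs
begin

theorem lemma7:
  fixes V :: "'a set" and E :: "'a \<Rightarrow> 'a \<Rightarrow> bool" and \<phi> :: "'a \<Rightarrow> nat" and v :: 'a
  assumes "graph V E"
    and "colouring4 V E \<phi>"
    and "v \<in> V"
    and "degree V E v = 3"
    and "frozen V E \<phi> v"
  shows "\<forall>u \<in> neighbours V E v. frozen V E \<phi> u"
proof -
  define N where "N = neighbours V E v"
  have G: "finite V" "\<And>x y. E x y \<Longrightarrow> x \<in> V \<and> y \<in> V" "\<And>x y. E x y \<Longrightarrow> E y x" "\<And>x. \<not> E x x"
    using assms(1) unfolding graph_def by blast+
  have finN: "finite N" using G(1) unfolding N_def neighbours_def by simp
  have cardN: "card N = 3" using assms(4) unfolding N_def degree_def by simp
  have col: "\<And>x. x \<in> V \<Longrightarrow> \<phi> x \<in> {1,2,3,4}" "\<And>x y. E x y \<Longrightarrow> \<phi> x \<noteq> \<phi> y"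
    using assms(2) unfolding colouring4_def by blast+
  have fr: "\<And>d. reachable V E \<phi> d \<Longrightarrow> d v = \<phi> v"
    using assms(5) unfolding frozen_def by blast
  have cover: "{1,2,3,4} - {\<phi> v} \<subseteq> \<phi> ` N"
  proof
    fix k assume k: "k \<in> {1,2,3,4} - {\<phi> v}"
    show "k \<in> \<phi> ` N"
    proof (rule ccontr)
      assume nk: "k \<notin> \<phi> ` N"
      define d where "d = \<phi>(v := k)"
      have "colouring4 V E d"
        unfolding colouring4_def d_def
      proof (intro conjI ballI allI impI)
        fix x assume "x \<in> V" then show "(\<phi>(v := k)) x \<in> {1,2,3,4}" using col(1) k by auto
      next
        fix x y assume e: "E x y"
        show "(\<phi>(v := k)) x \<noteq> (\<phi>(v := k)) y"
        proof -
          have "x = v \<Longrightarrow> y \<in> N" using e G(2) unfolding N_def neighbours_def by auto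
          moreover have "y = v \<Longrightarrow> x \<in> N" using e G(2,3) unfolding N_def neighbours_def by blast
          ultimately show ?thesis using e G(4) col(2) nk by (auto)
        qed
      qed
      moreover have "{x \<in> V. \<phi> x \<noteq> d x} = {v}" using k assms(3) unfolding d_def by auto
      ultimately have "recolour_step V E \<phi> d" using assms(2) unfolding recolour_step_def by simp
      then have "reachable V E \<phi> d" unfolding reachable_def by blast
      then have "d v = \<phi> v" by (rule fr)
      then show False using k unfolding d_def by simp
    qed
  qed
  have "card ({1,2,3,4} - {\<phi> v}) = (3::nat)" using col(1)[OF assms(3)] by auto
  then have "3 \<le> card (\<phi> ` N)" using cover by (metis card_mono finite_imageI finN)
  moreover have "card (\<phi> ` N) \<le> card N" using finN card_image_le by blast
  ultimately have "card (\<phi> ` N) = card N" using cardN by simp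
  then have inj: "inj_on \<phi> N" using finN eq_card_imp_inj_on by blast
  have inv: "\<forall>w\<in>N. c w = \<phi> w" if "reachable V E \<phi> c" for c
    using that unfolding reachable_def
  proof (induction rule: rtranclp_induct)
    case base then show ?case by simp
  next
    case (step c c')
    have rc': "reachable V E \<phi> c'" using step(1,2) unfolding reachable_def by simp
    have cv: "c' v = \<phi> v" using fr[OF rc'] .
    have cc': "colouring4 V E c'" using step(2) unfolding recolour_step_def by blast
    have c1: "card {y \<in> V. c y \<noteq> c' y} = 1" using step(2) unfolding recolour_step_def by blast
    obtain x where x: "{y \<in> V. c y \<noteq> c' y} = {x}"
      using card_1_singletonE[OF c1] by blast
    have same: "c' w = c w" if "w \<in> V" "w \<noteq> x" for w
    proof -
      have "w \<notin> {y \<in> V. c y \<noteq> c' y}" unfolding x using that(2) by simp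
      then show ?thesis using that(1) by simp
    qed
    have "x \<in> {y \<in> V. c y \<noteq> c' y}" unfolding x by simp
    then have xV: "x \<in> V" by simp
    show ?case
    proof
      fix w assume wN: "w \<in> N"
      have wV: "w \<in> V" using wN unfolding N_def neighbours_def by simp
      show "c' w = \<phi> w"
      proof (cases "w = x")
        case False then show ?thesis using same[OF wV] step(3) wN by simp
      next
        case True
        show ?thesis
        proof (rule ccontr)
          assume ne: "c' w \<noteq> \<phi> w"
          have xN: "x \<in> N" using wN True by simp
          have vx: "v \<noteq> x" using xN G(4) unfolding N_def neighbours_def by auto
          have oth: "\<And>b. b \<in> N \<Longrightarrow> b \<noteq> x \<Longrightarrow> c' b = \<phi> b"
            using same step(3) unfolding N_def neighbours_def by auto
          define d where "d = c'(v := \<phi> x)"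
          have "colouring4 V E d"
            unfolding colouring4_def d_def
          proof (intro conjI ballI allI impI)
            fix y assume "y \<in> V" then show "(c'(v := \<phi> x)) y \<in> {1,2,3,4}"
              using col(1) xV cc' unfolding colouring4_def by auto
          next
            fix a b assume e: "E a b"
            have ab: "c' a \<noteq> c' b" using e cc' unfolding colouring4_def by blast
            have nb: "\<And>b. E v b \<Longrightarrow> c' b \<noteq> \<phi> x"
            proof -
              fix b assume eb: "E v b"
              then have bN: "b \<in> N" using G(2) unfolding N_def neighbours_def by auto
              show "c' b \<noteq> \<phi> x"
              proof (cases "b = x")
                case True then show ?thesis using ne \<open>w = x\<close> by simp
              next
                case False
                then have "\<phi> b \<noteq> \<phi> x" using inj bN xN inj_on_eq_iff by metis
                then show ?thesis using oth[OF bN False] by simp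
              qed
            qed
            show "(c'(v := \<phi> x)) a \<noteq> (c'(v := \<phi> x)) b"
              using ab nb[of b] nb[of a] e G(3) G(4) by (cases "a = v"; cases "b = v") auto
          qed
          moreover have "{y \<in> V. c' y \<noteq> d y} = {v}"
            using assms(3) cv col(2)[of v x] xN unfolding d_def N_def neighbours_def by auto
          ultimately have "recolour_step V E c' d" using cc' unfolding recolour_step_def by simp
          then have "reachable V E \<phi> d" using rc' unfolding reachable_def by simp
          then have "d v = \<phi> v" by (rule fr)
          then show False using col(2)[of v x] xN unfolding d_def N_def neighbours_def by auto
        qed
      qed
    qed
  qed
  show ?thesis
    unfolding frozen_def N_def[symmetric] using inv by blast
qed

end
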